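(* Let $((x_n,y_n,z_n,t_n))_n$ be an optimal F sequence with $z_0,t_0\neq0$, such that $(z_n)$ converges to a nonzero limit $z_\infty$, and suppose there are constants $C>1$, $\epsilon>0$ and $n_0$ with $|x_n|,|y_n|,|z_n|,|t_n|\le C$ for all $n$ and $|x_n|,|y_n|,|z_n|,|t_n|\ge\epsilon$ for all $n\ge n_0$. Let $\lambda_n=(x_n/z_\infty)^{2^n}\,z_\infty$. Then $(\lambda_n)$ converges to a limit $\lambda$. Moreover there is a constant $c_1>0$, depending on $C$, $\epsilon$ and $|\lambda|$, such that for all sufficiently large $P$: if $k$ is the first integer with $|z_k-t_k|\le 2^{-P-k-c_1}$, then $|\lambda_{k+1}-\lambda|\le 2^{-P}$.
   Context: Optimal F sequence: given $(x_0,y_0,z_0,t_0)\in\mathbb{C}^4$, define recursively $$(x_{n+1},y_{n+1},z_{n+1},t_{n+1})=\Big(\tfrac{\sqrt{x_n}\sqrt{z_n}+\sqrt{y_n}\sqrt{t_n}}{2},\ \tfrac{\sqrt{x_n}\sqrt{t_n}+\sqrt{y_n}\sqrt{z_n}}{2},\ \tfrac{z_n+t_n}{2},\ \sqrt{z_n}\sqrt{t_n}\Big),$$ with square roots chosen "good": $\Re\sqrt{x_n}\ge0$, $\Re\sqrt{z_n}\ge0$; either $|\sqrt{x_n}-\sqrt{y_n}|<|\sqrt{x_n}+\sqrt{y_n}|$ or equality and $\Im(\sqrt{y_n}/\sqrt{x_n})>0$; either $|\sqrt{z_n}-\sqrt{t_n}|<|\sqrt{z_n}+\sqrt{t_n}|$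 or equality and $\Im(\sqrt{t_n}/\sqrt{z_n})>0$. *)

theory Defs
  imports "HOL-Analysis.Analysis"
begin

definition good_roots ::
  "complex \<Rightarrow> complex \<Rightarrow> complex \<Rightarrow> complex \<Rightarrow>
   complex \<Rightarrow> complex \<Rightarrow> complex \<Rightarrow> complex \<Rightarrow> bool" where
  "good_roots x y z t a b c d \<longleftrightarrow>
     a\<^sup>2 = x \<and> b\<^sup>2 = y \<and> c\<^sup>2 = z \<and> d\<^sup>2 = t \<and>
     Re a \<ge> 0 \<and> Re c \<ge> 0 \<and>
     (cmod (a - b) < cmod (a + b) \<or> (cmod (a - b) = cmod (a + b) \<and> Im (b / a) > 0)) \<and>
     (cmod (c - d) < cmod (c + d) \<or> (cmod (c - d) = cmod (c + d) \<and> Im (d / c) > 0))"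

definition optimal_F_seq ::
  "(nat \<Rightarrow> complex) \<Rightarrow> (nat \<Rightarrow> complex) \<Rightarrow> (nat \<Rightarrow> complex) \<Rightarrow> (nat \<Rightarrow> complex) \<Rightarrow> bool" where
  "optimal_F_seq x y z t \<longleftrightarrow>
     (\<forall>n. \<exists>a b c d. good_roots (x n) (y n) (z n) (t n) a b c d \<and>
        x (Suc n) = (a * c + b * d) / 2 \<and>
        y (Suc n) = (a * d + b * c) / 2 \<and>
        z (Suc n) = (z n + t n) / 2 \<and>
        t (Suc n) = c * d)"

definition F_hyps ::
  "(nat \<Rightarrow> complex) \<Rightarrow> (nat \<Rightarrow> complex) \<Rightarrow> (nat \<Rightarrow> complex) \<Rightarrow> (nat \<Rightarrow> complex)
   \<Rightarrow> complex \<Rightarrow> real \<Rightarrow> real \<Rightarrow> nat \<Rightarrow> bool" where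
  "F_hyps x y z t zinf C \<epsilon> n0 \<longleftrightarrow>
     optimal_F_seq x y z t \<and> z 0 \<noteq> 0 \<and> t 0 \<noteq> 0 \<and>
     z \<longlonglongrightarrow> zinf \<and> zinf \<noteq> 0 \<and> C > 1 \<and> \<epsilon> > 0 \<and>
     (\<forall>n. cmod (x n) \<le> C \<and> cmod (y n) \<le> C \<and> cmod (z n) \<le> C \<and> cmod (t n) \<le> C) \<and>
     (\<forall>n\<ge>n0. cmod (x n) \<ge> \<epsilon> \<and> cmod (y n) \<ge> \<epsilon> \<and> cmod (z n) \<ge> \<epsilon> \<and> cmod (t n) \<ge> \<epsilon>)"

definition lam_seq :: "(nat \<Rightarrow> complex) \<Rightarrow> complex \<Rightarrow> nat \<Rightarrow> complex" where
  "lam_seq x zinf n = (x n / zinf) ^ (2 ^ n) * zinf"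

end

theory Submission
  imports Defs
begin


lemma pow_norm_bound:
  fixes w :: complex
  shows "norm ((1+w)^N - 1) \<le> (1 + norm w)^N - 1"
proof (induction N)
  case 0 then show ?case by simp
next
  case (Suc N)
  have "(1+w)^Suc N - 1 = (1+w)*((1+w)^N - 1) + w" by (simp add: algebra_simps)
  hence "norm ((1+w)^Suc N - 1) \<le> norm (1+w) * norm ((1+w)^N - 1) + norm w"
    by (metis norm_mult norm_triangle_ineq)
  also have "\<dots> \<le> (1 + norm w) * ((1 + norm w)^N - 1) + norm w"
    by (intro add_mono mult_mono Suc.IH) (auto simp: norm_triangle_ineq[of 1 w, simplified])
  also have "\<dots> = (1 + norm w)^Suc N - 1" by (simp add: algebra_simps)
  finally show ?case .
qed

lemma pow_exp_bound:
  fixes u :: real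
  assumes "0 \<le> u" "real N * u \<le> 1"
  shows "(1+u)^N - 1 \<le> 2 * (real N * u)"
proof -
  have "(1+u)^N \<le> exp u ^ N"
    by (intro power_mono) (use assms in \<open>auto simp: exp_ge_add_one_self\<close>)
  also have "\<dots> = exp (real N * u)" by (simp add: exp_of_nat_mult)
  also have "\<dots> \<le> 1 + real N * u + (real N * u)^2"
    using assms by (intro exp_bound) auto
  also have "(real N * u)^2 \<le> real N * u"
    using assms by (simp add: power2_eq_square mult_right_le_one_le)
  finally show ?thesis by linarith
qed

lemma tail_lemma:
  fixes s :: "nat \<Rightarrow> 'a::real_normed_vector"
  assumes lim: "s \<longlonglongrightarrow> L"
    and step: "\<And>N. N \<ge> n \<Longrightarrow> norm (s (Suc N) - s N) \<le> v N - v (Suc N)"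
    and nn: "\<And>N. v N \<ge> 0"
  shows "norm (L - s n) \<le> v n"
proof -
  have *: "norm (s N - s n) \<le> v n - v N" if "N \<ge> n" for N
    using that
  proof (induction N rule: dec_induct)
    case base then show ?case by simp
  next
    case (step N)
    have "norm (s (Suc N) - s n) \<le> norm (s N - s n) + norm (s (Suc N) - s N)"
      using norm_triangle_ineq[of "s N - s n" "s (Suc N) - s N"] by simp
    also have "\<dots> \<le> (v n - v N) + (v N - v (Suc N))"
      using step.IH assms(2)[OF step.hyps(1)] by linarith
    finally show ?case by simp
  qed
  have "(\<lambda>N. norm (s N - s n)) \<longlonglongrightarrow> norm (L - s n)"
    by (intro tendsto_intros lim)
  moreover have "eventually (\<lambda>N. norm (s N - s n) \<le> v n) sequentially"
    using eventually_ge_at_top[of n]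
  proof (rule eventually_mono)
    fix N assume "N \<ge> n"
    thus "norm (s N - s n) \<le> v n" using *[of N] nn[of N] by linarith
  qed
  ultimately show ?thesis by (rule tendsto_upperbound) simp
qed

lemma good_nz:
  assumes "good_roots x y z t a b c d"
  shows "x \<noteq> 0" "y \<noteq> 0" "z \<noteq> 0" "t \<noteq> 0"
  using assms unfolding good_roots_def by (auto simp: power2_eq_square)

lemma good_le:
  assumes "good_roots x y z t a b c d"
  shows "cmod (a - b) \<le> cmod (a + b)" "cmod (c - d) \<le> cmod (c + d)"
  using assms unfolding good_roots_def by auto

lemma para:
  fixes c d :: complex
  shows "cmod (c+d)^2 + cmod (c-d)^2 = 2 * (cmod c ^2 + cmod d ^2)"
proof -
  have "complex_of_real (cmod (c+d)^2 + cmod (c-d)^2) = complex_of_real (2 * (cmod c ^2 + cmod d ^2))"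
    unfolding of_real_add of_real_mult of_real_numeral complex_norm_square complex_cnj_add complex_cnj_diff
    by (simp add: algebra_simps)
  thus ?thesis by (simp only: of_real_eq_iff)
qed




locale fseq =
  fixes x y z t :: "nat \<Rightarrow> complex" and zinf :: complex and C ep :: real
    and a b c d :: "nat \<Rightarrow> complex"
  assumes roots: "\<And>n. good_roots (x n) (y n) (z n) (t n) (a n) (b n) (c n) (d n)"
  and xS: "\<And>n. x (Suc n) = (a n * c n + b n * d n) / 2"
  and yS: "\<And>n. y (Suc n) = (a n * d n + b n * c n) / 2"
  and zS: "\<And>n. z (Suc n) = (z n + t n) / 2"
  and tS: "\<And>n. t (Suc n) = c n * d n"
  and zlim: "z \<longlonglongrightarrow> zinf" and zinf_nz: "zinf \<noteq> 0"
  and ub: "\<And>n. cmod (x n) \<le> C \<and> cmod (y n) \<le> C \<and> cmod (z n) \<le> C \<and> cmod (t n) \<le> C"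
  and ep_pos: "ep > 0"
  and lb: "\<And>n. ep \<le> cmod (x n) \<and> ep \<le> cmod (y n) \<and> ep \<le> cmod (z n) \<and> ep \<le> cmod (t n)"
begin

definition "g n = cmod (c n - d n)"
definition "h n = cmod (a n - b n)"
definition "s n = h n + g n"
definition "e n = cmod (z n - t n)"
definition "\<kappa> = 1 / (2 * sqrt (2 * ep))"
definition "lam = lam_seq x zinf"
definition "w n = x (Suc n) ^ 2 / (x n * zinf) - 1"
definition "K = 3 * C * sqrt C / (ep * cmod zinf)"

lemma sq: "a n ^ 2 = x n" "b n ^ 2 = y n" "c n ^ 2 = z n" "d n ^ 2 = t n"
  using roots[of n] unfolding good_roots_def by auto

lemma C_pos: "C \<ge> ep" using ub[of 0] lb[of 0] by auto

lemma root_norm_le: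
  fixes r v :: complex assumes "r^2 = v" "cmod v \<le> C" shows "cmod r \<le> sqrt C"
proof -
  have "cmod r ^2 = cmod v" by (metis assms(1) norm_power)
  hence "cmod r ^2 \<le> C" using assms by simp
  thus ?thesis by (simp add: real_le_rsqrt)
qed

lemma abcd_le: "cmod (a n) \<le> sqrt C" "cmod (b n) \<le> sqrt C" "cmod (c n) \<le> sqrt C" "cmod (d n) \<le> sqrt C"
  using root_norm_le[OF sq(1)] root_norm_le[OF sq(2)] root_norm_le[OF sq(3)] root_norm_le[OF sq(4)] ub[of n]
  by auto

lemma sum_lb:
  fixes r q :: complex
  assumes "cmod (r - q) \<le> cmod (r + q)" "ep \<le> cmod (r^2)" "ep \<le> cmod (q^2)"
  shows "sqrt (2*ep) \<le> cmod (r + q)"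
proof -
  have p: "cmod (r+q)^2 + cmod (r-q)^2 = 2 * (cmod r ^2 + cmod q ^2)" by (rule para)
  have "cmod (r-q)^2 \<le> cmod (r+q)^2" using assms(1) by (simp add: power_mono)
  moreover have "cmod (r^2) = cmod r ^2" "cmod (q^2) = cmod q ^2" by (simp_all add: norm_power)
  ultimately have "2*ep \<le> cmod (r+q)^2" using p assms(2,3) by (smt (verit))
  from real_sqrt_le_mono[OF this] show ?thesis by simp
qed

lemma cd_lb: "sqrt (2*ep) \<le> cmod (c n + d n)"
  using sum_lb[of "c n" "d n"] good_le(2)[OF roots[of n]] lb[of n] sq by auto

lemma ab_lb: "sqrt (2*ep) \<le> cmod (a n + b n)"
  using sum_lb[of "a n" "b n"] good_le(1)[OF roots[of n]] lb[of n] sq by auto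

lemma e_eq: "e n = g n * cmod (c n + d n)"
proof -
  have "z n - t n = (c n - d n) * (c n + d n)" using sq[of n] by (simp add: algebra_simps power2_eq_square)
  thus ?thesis unfolding e_def g_def by (simp add: norm_mult)
qed

lemma f_eq: "cmod (x n - y n) = h n * cmod (a n + b n)"
proof -
  have "x n - y n = (a n - b n) * (a n + b n)" using sq[of n] by (simp add: algebra_simps power2_eq_square)
  thus ?thesis unfolding h_def by (simp add: norm_mult)
qed

lemma e_Suc: "e (Suc n) = g n ^ 2 / 2"
proof -
  have eq: "z (Suc n) - t (Suc n) = (c n - d n)^2 / 2" using sq[of n] zS tS
    by (simp add: algebra_simps power2_eq_square field_simps)
  thus ?thesis unfolding e_def g_def by (subst eq) (simp add: norm_power norm_divide)
qed

lemma f_Suc: "cmod (x (Suc n) - y (Suc n)) = h n * g n / 2"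
proof -
  have eq: "x (Suc n) - y (Suc n) = (a n - b n) * (c n - d n) / 2" using xS yS
    by (simp add: algebra_simps field_simps)
  thus ?thesis unfolding h_def g_def by (subst eq) (simp add: norm_mult norm_divide)
qed

lemma sq_pos: "sqrt (2*ep) > 0" using ep_pos by simp

lemma g_le: "g n \<le> e n / sqrt (2*ep)"
proof -
  have "g n * sqrt (2*ep) \<le> g n * cmod (c n + d n)"
    using cd_lb[of n] by (intro mult_left_mono) (auto simp: g_def)
  thus ?thesis using sq_pos e_eq[of n] by (simp add: field_simps)
qed

lemma h_le: "h n \<le> cmod (x n - y n) / sqrt (2*ep)"
proof -
  have "h n * sqrt (2*ep) \<le> h n * cmod (a n + b n)"
    using ab_lb[of n] by (intro mult_left_mono) (auto simp: h_def)
  thus ?thesis using sq_pos f_eq[of n] by (simp add: field_simps)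
qed

lemma g_nn: "g n \<ge> 0" and h_nn: "h n \<ge> 0" and s_nn: "s n \<ge> 0" and e_nn: "e n \<ge> 0"
  by (auto simp: g_def h_def s_def e_def)

lemma kappa_pos: "\<kappa> > 0" using sq_pos by (simp add: \<kappa>_def)

lemma g_Suc: "g (Suc n) \<le> \<kappa> * g n ^ 2"
  using g_le[of "Suc n"] e_Suc[of n] by (simp add: \<kappa>_def field_simps)

lemma h_Suc: "h (Suc n) \<le> \<kappa> * h n * g n"
  using h_le[of "Suc n"] f_Suc[of n] by (simp add: \<kappa>_def field_simps)

lemma s_Suc: "s (Suc n) \<le> \<kappa> * s n * g n"
proof -
  have "\<kappa> * g n ^ 2 \<le> \<kappa> * g n * g n" by (simp add: power2_eq_square)
  thus ?thesis using g_Suc[of n] h_Suc[of n] kappa_pos g_nn[of n] h_nn[of n]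
    unfolding s_def by (simp add: algebra_simps power2_eq_square)
qed

lemma e_half: "e (Suc n) \<le> e n / 2"
proof -
  have "g n ^ 2 \<le> g n * cmod (c n + d n)"
    using good_le(2)[OF roots[of n]] by (simp add: power2_eq_square g_def mult_left_mono)
  thus ?thesis using e_Suc[of n] e_eq[of n] by simp
qed

lemma e_geom: "e n \<le> e 0 / 2^n"
proof (induction n)
  case (Suc n)
  have "2*e (Suc n)*2^n \<le> e n*2^n" using e_half[of n] by (intro mult_right_mono) auto
  moreover have "e n * 2^n \<le> e 0" using Suc.IH by (simp add: pos_le_divide_eq)
  moreover have "e (Suc n) * 2^Suc n = 2*e (Suc n)*2^n" by simp
  ultimately have "e (Suc n) * 2^Suc n \<le> e 0" by linarith
  thus ?case by (simp add: pos_le_divide_eq)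
qed simp

lemma e_lim: "e \<longlonglongrightarrow> 0"
proof (rule Lim_null_comparison)
  have "norm (e n) \<le> e 0 * (1/2)^n" for n
  proof -
    have "e 0 * (1/2)^n = e 0 / 2^n" by (simp add: power_one_over)
    thus ?thesis using e_geom[of n] e_nn[of n] by simp
  qed
  thus "eventually (\<lambda>n. norm (e n) \<le> e 0 * (1/2)^n) sequentially" by (intro always_eventually) blast
  show "(\<lambda>n. e 0 * (1/2::real)^n) \<longlonglongrightarrow> 0"
    by (intro tendsto_mult_right_zero LIMSEQ_power_zero) auto
qed

lemma g_lim: "g \<longlonglongrightarrow> 0"
proof (rule Lim_null_comparison)
  show "(\<lambda>n. e n / sqrt (2*ep)) \<longlonglongrightarrow> 0" using tendsto_divide_zero[OF e_lim] by simp
  have "norm (g n) \<le> e n / sqrt (2*ep)" for n using g_le[of n] g_nn[of n] by simp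
  thus "eventually (\<lambda>n. norm (g n) \<le> e n / sqrt (2*ep)) sequentially" by (intro always_eventually) blast
qed

lemma z_tail: "cmod (zinf - z n) \<le> e n"
proof (rule tail_lemma[OF zlim])
  fix N
  have "cmod (z (Suc N) - z N) = e N / 2"
    unfolding e_def zS by (simp add: field_simps norm_divide norm_minus_commute)
  thus "cmod (z (Suc N) - z N) \<le> e N - e (Suc N)" using e_half[of N] by simp
qed (rule e_nn)

end



context fseq begin

lemma x_nz: "x n \<noteq> 0" using lb[of n] ep_pos by auto

lemma K_pos: "K > 0" using C_pos ep_pos zinf_nz by (simp add: K_def)

lemma w_bound: "cmod (w n) \<le> K * s n"
proof -
  let ?X = "x (Suc n)" and ?ac = "a n * c n"
  have num0: "X^2 - A^2 * Z = (X - A * Cc) * (X + A * Cc) + A^2 * (Cc^2 - Z)" for X A Cc Z :: complex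
    by (simp add: algebra_simps power2_eq_square)
  have num: "?X^2 - x n * zinf = (?X - ?ac) * (?X + ?ac) + x n * (z n - zinf)"
    using num0[of ?X "a n" zinf "c n"] by (simp only: sq)
  have d1: "?X - ?ac = ((b n - a n) * d n + a n * (d n - c n)) / 2"
    by (simp add: xS field_simps)
  have sC: "sqrt C \<ge> 0" using C_pos ep_pos by simp
  have "cmod ((b n - a n) * d n + a n * (d n - c n)) \<le> cmod (b n - a n) * cmod (d n) + cmod (a n) * cmod (d n - c n)"
    using norm_triangle_ineq[of "(b n - a n) * d n" "a n * (d n - c n)"] by (simp add: norm_mult)
  also have "\<dots> \<le> h n * sqrt C + sqrt C * g n"
    using abcd_le[of n] C_pos ep_pos by (intro add_mono mult_mono) (auto simp: h_def g_def norm_minus_commute)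
  finally have n1: "cmod (?X - ?ac) \<le> (h n * sqrt C + sqrt C * g n) / 2"
    unfolding d1 by (simp add: norm_divide)
  have "cmod (?X + ?ac) \<le> cmod ?X + cmod (a n) * cmod (c n)"
    using norm_triangle_ineq[of ?X ?ac] by (simp add: norm_mult)
  also have "\<dots> \<le> C + sqrt C * sqrt C"
    using ub[of "Suc n"] abcd_le[of n] C_pos ep_pos by (intro add_mono mult_mono) auto
  also have "\<dots> = 2 * C" using sC C_pos ep_pos by simp
  finally have n2: "cmod (?X + ?ac) \<le> 2 * C" .
  have cd_ub: "cmod (c n + d n) \<le> 2 * sqrt C"
    using abcd_le[of n] norm_triangle_ineq[of "c n" "d n"] by linarith
  have "cmod (z n - zinf) \<le> e n" using z_tail[of n] by (simp add: norm_minus_commute)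
  also have "\<dots> \<le> g n * (2 * sqrt C)" unfolding e_eq
    using cd_ub by (intro mult_left_mono) (auto simp: g_def)
  finally have n3: "cmod (z n - zinf) \<le> 2 * sqrt C * g n" by (simp add: mult_ac)
  have "cmod (?X^2 - x n * zinf) \<le> cmod (?X - ?ac) * cmod (?X + ?ac) + cmod (x n) * cmod (z n - zinf)"
    unfolding num using norm_triangle_ineq[of "(?X - ?ac) * (?X + ?ac)" "x n * (z n - zinf)"] by (simp add: norm_mult)
  also have "\<dots> \<le> ((h n * sqrt C + sqrt C * g n) / 2) * (2 * C) + C * (2 * sqrt C * g n)"
    using n1 n2 n3 ub[of n] C_pos ep_pos sC h_nn[of n] g_nn[of n] by (intro add_mono mult_mono) auto
  also have "\<dots> = C * sqrt C * (h n + 3 * g n)" by (simp add: algebra_simps)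
  also have "\<dots> \<le> C * sqrt C * (3 * s n)"
    using sC C_pos ep_pos h_nn[of n] by (intro mult_left_mono) (auto simp: s_def)
  finally have nb: "cmod (?X^2 - x n * zinf) \<le> 3 * C * sqrt C * s n" by simp
  have wn: "w n = (?X^2 - x n * zinf) / (x n * zinf)"
    using x_nz[of n] zinf_nz by (simp add: w_def field_simps)
  have "cmod (w n) = cmod (?X^2 - x n * zinf) / (cmod (x n) * cmod zinf)"
    unfolding wn by (simp add: norm_divide norm_mult)
  also have "\<dots> \<le> (3 * C * sqrt C * s n) / (ep * cmod zinf)"
    using nb lb[of n] ep_pos zinf_nz C_pos sC s_nn[of n] by (intro frac_le mult_mono) auto
  also have "\<dots> = K * s n" by (simp add: K_def)
  finally show ?thesis .
qed

lemma lam_Suc: "lam (Suc n) = lam n * (1 + w n) ^ (2^n)"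
proof -
  have eq: "(x n / zinf) * (x (Suc n)^2 / (x n * zinf)) = (x (Suc n) / zinf)^2"
    using x_nz[of n] zinf_nz by (simp add: field_simps power2_eq_square)
  have "lam n * (1 + w n) ^ (2^n) = (x n / zinf) ^ (2^n) * zinf * (x (Suc n)^2 / (x n * zinf)) ^ (2^n)"
    by (simp add: lam_def lam_seq_def w_def)
  also have "\<dots> = ((x n / zinf) * (x (Suc n)^2 / (x n * zinf))) ^ (2^n) * zinf"
    unfolding power_mult_distrib by (simp add: ac_simps)
  also have "\<dots> = ((x (Suc n) / zinf)^2) ^ (2^n) * zinf" by (simp only: eq)
  also have "\<dots> = lam (Suc n)"
    by (simp add: lam_def lam_seq_def power_mult[symmetric] mult.commute)
  finally show ?thesis by simp
qed

lemma rho_bound: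
  assumes "2^n * (K * s n) \<le> 1"
  shows "cmod ((1 + w n) ^ (2^n) - 1) \<le> 2 * (2^n * (K * s n))"
proof -
  have "cmod ((1 + w n) ^ (2^n) - 1) \<le> (1 + cmod (w n)) ^ (2^n) - 1" by (rule pow_norm_bound)
  also have "\<dots> \<le> (1 + K * s n) ^ (2^n) - 1"
    using w_bound[of n] by (simp add: power_mono)
  also have "\<dots> \<le> 2 * (real (2^n) * (K * s n))"
    using assms K_pos s_nn[of n] by (intro pow_exp_bound) auto
  finally show ?thesis by simp
qed

lemma lam_diff:
  assumes "2^n * (K * s n) \<le> 1"
  shows "cmod (lam (Suc n) - lam n) \<le> cmod (lam n) * (2 * (2^n * (K * s n)))"
proof -
  have "lam (Suc n) - lam n = lam n * ((1 + w n) ^ (2^n) - 1)" by (simp add: lam_Suc algebra_simps)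
  hence "cmod (lam (Suc n) - lam n) = cmod (lam n) * cmod ((1 + w n) ^ (2^n) - 1)" by (simp add: norm_mult)
  also have "\<dots> \<le> cmod (lam n) * (2 * (2^n * (K * s n)))"
    using rho_bound[OF assms] by (intro mult_left_mono) auto
  finally show ?thesis .
qed

definition "M1 = (SOME M. \<forall>n\<ge>M. \<kappa> * g n \<le> 1/4)"

lemma M1: "n \<ge> M1 \<Longrightarrow> \<kappa> * g n \<le> 1/4"
proof -
  have "eventually (\<lambda>n. g n < 1/(4*\<kappa>)) sequentially"
    using order_tendstoD(2)[OF g_lim] kappa_pos by simp
  then obtain M where "\<forall>n\<ge>M. g n < 1/(4*\<kappa>)" by (auto simp: eventually_sequentially)
  hence "\<forall>n\<ge>M. \<kappa> * g n \<le> 1/4" using kappa_pos by (auto simp: field_simps less_imp_le)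
  hence "\<exists>M. \<forall>n\<ge>M. \<kappa> * g n \<le> 1/4" by blast
  from someI_ex[OF this] show "n \<ge> M1 \<Longrightarrow> \<kappa> * g n \<le> 1/4" unfolding M1_def by blast
qed

definition "\<beta> n = 2^n * s n"

lemma beta_nn: "\<beta> n \<ge> 0" using s_nn by (simp add: \<beta>_def)

lemma s_le_beta: "s n \<le> \<beta> n"
  using s_nn[of n] by (simp add: \<beta>_def mult_le_cancel_right1)

lemma beta_Suc: assumes "n \<ge> M1" shows "\<beta> (Suc n) \<le> \<beta> n / 2"
proof -
  have "s (Suc n) \<le> \<kappa> * s n * g n" by (rule s_Suc)
  also have "\<dots> = s n * (\<kappa> * g n)" by simp
  also have "\<dots> \<le> s n * (1/4)" using M1[OF assms] s_nn[of n] by (intro mult_left_mono) auto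
  finally have "s (Suc n) \<le> s n / 4" by simp
  hence "2^Suc n * s (Suc n) \<le> 2^Suc n * (s n / 4)" by (intro mult_left_mono) auto
  thus ?thesis by (simp add: \<beta>_def)
qed

lemma beta_geom: "n \<ge> M1 \<Longrightarrow> \<beta> n \<le> \<beta> M1 * 2^M1 * (1/2)^n"
proof (induction n rule: dec_induct)
  case base thus ?case by (simp add: power_one_over)
next
  case (step n)
  have "\<beta> (Suc n) \<le> \<beta> n / 2" by (rule beta_Suc[OF step(1)])
  also have "\<dots> \<le> \<beta> M1 * 2^M1 * (1/2)^n / 2" using step(3) by simp
  finally show ?case by simp
qed

lemma beta_lim: "\<beta> \<longlonglongrightarrow> 0"
proof (rule Lim_null_comparison)
  show "eventually (\<lambda>n. norm (\<beta> n) \<le> \<beta> M1 * 2^M1 * (1/2)^n) sequentially"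
    using eventually_ge_at_top[of M1]
  proof (rule eventually_mono)
    fix n assume "n \<ge> M1"
    thus "norm (\<beta> n) \<le> \<beta> M1 * 2^M1 * (1/2)^n" using beta_geom[of n] beta_nn[of n] by simp
  qed
  show "(\<lambda>n. \<beta> M1 * 2^M1 * (1/2::real)^n) \<longlonglongrightarrow> 0"
    by (intro tendsto_mult_right_zero LIMSEQ_power_zero) auto
qed

lemma beta_summable: "summable \<beta>"
  by (rule summable_ratio_test[of "1/2" M1]) (use beta_Suc beta_nn in auto)

lemma lam_convergent: "convergent lam"
proof -
  define \<rho> where "\<rho> n = (1 + w n) ^ (2^n)" for n
  have lamP: "lam (Suc n) = lam 0 * (\<Prod>i\<le>n. \<rho> i)" for n
    by (induction n) (simp_all add: lam_Suc \<rho>_def)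
  have "eventually (\<lambda>n. K * \<beta> n < 1) sequentially"
    using order_tendstoD(2)[OF tendsto_mult_right_zero[OF beta_lim, of K]] by simp
  hence ev: "eventually (\<lambda>n. norm (norm (\<rho> n - 1)) \<le> 2 * K * \<beta> n) sequentially"
  proof (rule eventually_mono)
    fix n assume "K * \<beta> n < 1"
    hence "2^n * (K * s n) \<le> 1" by (simp add: \<beta>_def algebra_simps)
    from rho_bound[OF this] show "norm (norm (\<rho> n - 1)) \<le> 2 * K * \<beta> n"
      by (simp add: \<rho>_def \<beta>_def algebra_simps)
  qed
  have "summable (\<lambda>n. 2 * K * \<beta> n)" by (intro summable_mult beta_summable)
  from summable_comparison_test_ev[OF ev this]
  have "summable (\<lambda>n. norm (\<rho> n - 1))" .
  hence "convergent_prod \<rho>"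
    by (intro abs_convergent_prod_imp_convergent_prod summable_imp_abs_convergent_prod)
  from convergent_prod_LIMSEQ[OF this]
  have "(\<lambda>n. lam 0 * (\<Prod>i\<le>n. \<rho> i)) \<longlonglongrightarrow> lam 0 * prodinf \<rho>" by (intro tendsto_intros)
  hence "(\<lambda>n. lam (Suc n)) \<longlonglongrightarrow> lam 0 * prodinf \<rho>" by (simp add: lamP)
  hence "lam \<longlonglongrightarrow> lam 0 * prodinf \<rho>" by (rule LIMSEQ_imp_Suc)
  thus ?thesis by (rule convergentI)
qed

end



context fseq begin

lemma small_P0: "\<exists>P0. \<forall>j<M. 0 < e j \<longrightarrow> (1/2::real)^P0 < e j"
proof (induction M)
  case 0 show ?case by simp
next
  case (Suc M)
  then obtain P0 where P0: "\<forall>j<M. 0 < e j \<longrightarrow> (1/2::real)^P0 < e j" by blast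
  show ?case
  proof (cases "e M > 0")
    case True
    then obtain P1 where P1: "(1/2::real)^P1 < e M" using real_arch_pow_inv[of "e M" "1/2"] by auto
    have q1: "(1/2::real)^(max P0 P1) \<le> (1/2)^P0" and q2: "(1/2::real)^(max P0 P1) \<le> (1/2)^P1"
      by (intro power_decreasing; simp)+
    have "\<forall>j<Suc M. 0 < e j \<longrightarrow> (1/2::real)^(max P0 P1) < e j"
      using P0 P1 order_le_less_trans[OF q1] order_le_less_trans[OF q2] by (auto simp: less_Suc_eq)
    thus ?thesis by blast
  next
    case False
    hence "\<forall>j<Suc M. 0 < e j \<longrightarrow> (1/2::real)^P0 < e j" using P0 by (auto simp: less_Suc_eq)
    thus ?thesis by blast
  qed
qed

lemma pow_le: "(2::real) powr (-(real P + real k + 1)) \<le> (1/2)^P"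
proof -
  have "(2::real) powr (-(real P + real k + 1)) \<le> 2 powr (- real P)"
    by (intro powr_mono) auto
  also have "(2::real) powr (- real P) = (1/2)^P"
    by (simp add: powr_minus powr_realpow power_one_over inverse_eq_divide)
  finally show ?thesis .
qed

lemma pow_eq: "2 * 2^k * (2::real) powr (-(real P + real k + 1)) = 2 powr (- real P)"
proof -
  have a1: "2 * 2^k = (2::real) powr (real k + 1)" by (simp add: powr_add powr_realpow)
  have a2: "(2::real) powr (real k + 1) * 2 powr (-(real P + real k + 1)) = 2 powr (real k + 1 + -(real P + real k + 1))"
    by (rule powr_add[symmetric])
  have a3: "real k + 1 + -(real P + real k + 1) = - real P" by simp
  show ?thesis unfolding a1 a2 a3 ..
qed

lemma zero_case:
  assumes lim: "lam \<longlonglongrightarrow> L0" and ek: "e k = 0"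
  shows "lam (Suc k) = L0"
proof -
  have "cmod (c k + d k) > 0" using cd_lb[of k] sq_pos by linarith
  hence gk: "g k = 0" using ek e_eq[of k] by simp
  have s0: "s n = 0" if "n \<ge> Suc k" for n
    using that
  proof (induction n rule: dec_induct)
    case base show ?case using s_Suc[of k] gk s_nn[of "Suc k"] by simp
  next
    case (step n)
    show ?case using s_Suc[of n] step(3) s_nn[of "Suc n"] by simp
  qed
  have "cmod (L0 - lam (Suc k)) \<le> 0"
  proof (rule tail_lemma[OF lim, where v = "\<lambda>_. 0"])
    fix N assume "N \<ge> Suc k"
    hence "w N = 0" using w_bound[of N] s0[of N] by simp
    thus "cmod (lam (Suc N) - lam N) \<le> 0 - 0" by (simp add: lam_Suc)
  qed simp
  thus ?thesis by simp
qed

lemma part2: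
  assumes lim: "lam \<longlonglongrightarrow> L0"
  shows "\<exists>P0::nat. \<forall>P\<ge>P0. \<forall>k. e k \<le> 2 powr (-(real P + real k + 1)) \<longrightarrow> cmod (lam (Suc k) - L0) \<le> 2 powr (- real P)"
proof -
  obtain B where B: "B > 0" "\<And>n. cmod (lam n) \<le> B"
    using convergent_imp_Bseq[OF convergentI[OF lim]] by (auto elim: BseqE)
  have sq2: "sqrt (2*ep) > 0" by (rule sq_pos)
  have e1: "eventually (\<lambda>n. K * \<beta> n < 1) sequentially"
    using order_tendstoD(2)[OF tendsto_mult_right_zero[OF beta_lim, of K]] by simp
  have pos2: "0 < 2 * sqrt (2*ep)" using sq2 by simp
  have e2: "eventually (\<lambda>n. (8*B*K*\<kappa>) * \<beta> n < 2 * sqrt (2*ep)) sequentially"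
    by (rule order_tendstoD(2)[OF tendsto_mult_right_zero[OF beta_lim] pos2])
  have "eventually (\<lambda>n. n \<ge> M1 \<and> K * \<beta> n < 1 \<and> (8*B*K*\<kappa>) * \<beta> n < 2 * sqrt (2*ep)) sequentially"
    using e1 e2 eventually_ge_at_top[of M1] by eventually_elim blast
  then obtain M where M: "\<And>n. n \<ge> M \<Longrightarrow> n \<ge> M1 \<and> K * \<beta> n < 1 \<and> (8*B*K*\<kappa>) * \<beta> n < 2 * sqrt (2*ep)"
    by (auto simp: eventually_sequentially)
  have cpos: "0 \<le> 4*B*K" using B K_pos by simp
  have large: "cmod (L0 - lam (Suc k)) \<le> 2 * 2^k * e k" if k: "k \<ge> M" for k
  proof -
    have "cmod (L0 - lam (Suc k)) \<le> 4*B*K * \<beta> (Suc k)"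
    proof (rule tail_lemma[OF lim, where v = "\<lambda>n. 4*B*K * \<beta> n"])
      fix N assume N: "N \<ge> Suc k"
      hence MN: "N \<ge> M1" "K * \<beta> N < 1" using M[of N] k by auto
      have "2^N * (K * s N) \<le> 1" using MN(2) by (simp add: \<beta>_def algebra_simps)
      from lam_diff[OF this]
      have "cmod (lam (Suc N) - lam N) \<le> cmod (lam N) * (2 * (K * \<beta> N))" by (simp add: \<beta>_def algebra_simps)
      also have "\<dots> \<le> B * (2 * (K * \<beta> N))"
        using B K_pos beta_nn[of N] by (intro mult_right_mono) auto
      also have "\<dots> \<le> 4*B*K * \<beta> N - 4*B*K * \<beta> (Suc N)"
      proof -
        have "4*B*K * \<beta> (Suc N) \<le> 4*B*K * (\<beta> N / 2)"
          using beta_Suc[OF MN(1)] cpos by (intro mult_left_mono) auto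
        thus ?thesis by simp
      qed
      finally show "cmod (lam (Suc N) - lam N) \<le> 4*B*K * \<beta> N - 4*B*K * \<beta> (Suc N)" .
    qed (use cpos beta_nn in auto)
    also have "4*B*K * \<beta> (Suc k) \<le> 2 * 2^k * e k"
    proof -
      have ks: "\<kappa> * s k \<ge> 0" using kappa_pos s_nn[of k] by simp
      have "s (Suc k) \<le> \<kappa> * s k * g k" by (rule s_Suc)
      also have "\<dots> \<le> \<kappa> * s k * (e k / sqrt (2*ep))"
        using g_le[of k] ks by (intro mult_left_mono) auto
      finally have sS: "s (Suc k) \<le> \<kappa> * s k * (e k / sqrt (2*ep))" .
      have "(8*B*K*\<kappa>) * s k \<le> (8*B*K*\<kappa>) * \<beta> k"
        using s_le_beta[of k] B K_pos kappa_pos by (intro mult_left_mono) auto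
      hence c8: "(8*B*K*\<kappa>) * s k \<le> 2 * sqrt (2*ep)" using M[OF k] by linarith
      have "4*B*K * \<beta> (Suc k) = 4*B*K * 2^Suc k * s (Suc k)" by (simp add: \<beta>_def)
      also have "\<dots> \<le> 4*B*K * 2^Suc k * (\<kappa> * s k * (e k / sqrt (2*ep)))"
        using sS cpos B K_pos by (intro mult_left_mono) auto
      also have "\<dots> = ((8*B*K*\<kappa>) * s k) * (2^k * e k / sqrt (2*ep))" by (simp add: algebra_simps)
      also have "\<dots> \<le> (2 * sqrt (2*ep)) * (2^k * e k / sqrt (2*ep))"
        using c8 e_nn[of k] sq2 by (intro mult_right_mono) auto
      also have "\<dots> = 2 * 2^k * e k" using sq2 by simp
      finally show ?thesis .
    qed
    finally show ?thesis .
  qed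
  obtain P0 where P0: "\<forall>j<M. 0 < e j \<longrightarrow> (1/2::real)^P0 < e j" using small_P0 by blast
  have "\<forall>P\<ge>P0. \<forall>k. e k \<le> 2 powr (-(real P + real k + 1)) \<longrightarrow> cmod (lam (Suc k) - L0) \<le> 2 powr (- real P)"
  proof (intro allI impI)
    fix P k assume P: "P \<ge> P0" and ek: "e k \<le> 2 powr (-(real P + real k + 1))"
    show "cmod (lam (Suc k) - L0) \<le> 2 powr (- real P)"
    proof (cases "k \<ge> M")
      case True
      have "cmod (lam (Suc k) - L0) \<le> 2 * 2^k * e k" using large[OF True] by (simp add: norm_minus_commute)
      also have "\<dots> \<le> 2 * 2^k * 2 powr (-(real P + real k + 1))"
        using ek by (intro mult_left_mono) auto
      also have "\<dots> = 2 powr (- real P)" by (rule pow_eq)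
      finally show ?thesis .
    next
      case False
      have "e k \<le> (1/2)^P" using ek pow_le[of P k] by linarith
      also have "(1/2::real)^P \<le> (1/2)^P0" by (intro power_decreasing P) auto
      finally have "e k \<le> (1/2)^P0" .
      moreover have "k < M" using False by simp
      ultimately have "\<not> 0 < e k" using P0 by fastforce
      hence "e k = 0" using e_nn[of k] by linarith
      from zero_case[OF lim this] show ?thesis by simp
    qed
  qed
  thus ?thesis by blast
qed

lemma part1': "convergent (lam_seq x zinf)" using lam_convergent by (simp add: lam_def)

lemma part2':
  assumes lim: "lam_seq x zinf \<longlonglongrightarrow> L0"
  shows "\<exists>P0::nat. \<forall>P\<ge>P0. \<forall>k. cmod (z k - t k) \<le> 2 powr (-(real P + real k + 1)) \<longrightarrow> cmod (lam_seq x zinf (Suc k) - L0) \<le> 2 powr (- real P)"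
  using part2[of L0] lim by (simp add: lam_def e_def)

end

lemma get_ep:
  fixes m :: "nat \<Rightarrow> real"
  assumes "\<And>n. m n > 0" "\<And>n. n \<ge> n0 \<Longrightarrow> \<epsilon> \<le> m n" "\<epsilon> > 0"
  shows "\<exists>ep>0. \<forall>n. ep \<le> m n"
proof -
  have "\<exists>\<delta>>0. \<forall>n<N. \<delta> \<le> m n" for N
  proof (induction N)
    case 0 show ?case by (intro exI[of _ 1]) simp
  next
    case (Suc N)
    then obtain \<delta> where "\<delta> > 0" "\<forall>n<N. \<delta> \<le> m n" by blast
    hence "min \<delta> (m N) > 0 \<and> (\<forall>n<Suc N. min \<delta> (m N) \<le> m n)"
      using assms(1)[of N] by (auto simp: less_Suc_eq)
    thus ?case by blast
  qed
  then obtain \<delta> where d: "\<delta> > 0" "\<forall>n<n0. \<delta> \<le> m n" by blast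
  have "\<forall>n. min \<delta> \<epsilon> \<le> m n"
  proof
    fix n show "min \<delta> \<epsilon> \<le> m n"
      using d assms(2)[of n] by (cases "n < n0") auto
  qed
  thus ?thesis using d assms(3) by (intro exI[of _ "min \<delta> \<epsilon>"]) auto
qed

lemma from_hyps:
  assumes H: "F_hyps x y z t zinf C \<epsilon> n0"
  shows "\<exists>ep a b c d. fseq x y z t zinf C ep a b c d"
proof -
  from H have opt: "optimal_F_seq x y z t" by (simp add: F_hyps_def)
  define Q where "Q n a b c d \<longleftrightarrow> good_roots (x n) (y n) (z n) (t n) a b c d \<and>
        x (Suc n) = (a * c + b * d) / 2 \<and> y (Suc n) = (a * d + b * c) / 2 \<and>
        z (Suc n) = (z n + t n) / 2 \<and> t (Suc n) = c * d" for n a b c d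
  have "\<forall>n. \<exists>r. Q n (fst r) (fst (snd r)) (fst (snd (snd r))) (snd (snd (snd r)))"
  proof
    fix n
    from opt obtain a b c d where "Q n a b c d"
      unfolding optimal_F_seq_def Q_def by blast
    thus "\<exists>r. Q n (fst r) (fst (snd r)) (fst (snd (snd r))) (snd (snd (snd r)))"
      by (intro exI[of _ "(a, b, c, d)"]) simp
  qed
  from choice[OF this] obtain f where
    fQ: "\<forall>n. Q n (fst (f n)) (fst (snd (f n))) (fst (snd (snd (f n)))) (snd (snd (snd (f n))))"
    by blast
  hence f: "\<forall>n. good_roots (x n) (y n) (z n) (t n) (fst (f n)) (fst (snd (f n))) (fst (snd (snd (f n)))) (snd (snd (snd (f n)))) \<and>
        x (Suc n) = (fst (f n) * fst (snd (snd (f n))) + fst (snd (f n)) * snd (snd (snd (f n)))) / 2 \<and>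
        y (Suc n) = (fst (f n) * snd (snd (snd (f n))) + fst (snd (f n)) * fst (snd (snd (f n)))) / 2 \<and>
        z (Suc n) = (z n + t n) / 2 \<and>
        t (Suc n) = fst (snd (snd (f n))) * snd (snd (snd (f n)))"
    unfolding Q_def by blast
  define m where "m n = min (min (cmod (x n)) (cmod (y n))) (min (cmod (z n)) (cmod (t n)))" for n
  have mpos: "m n > 0" for n
    using good_nz[OF conjunct1[OF spec[OF f, of n]]] by (simp add: m_def)
  have "\<exists>ep>0. \<forall>n. ep \<le> m n"
    using H by (intro get_ep[OF mpos, of n0 \<epsilon>]) (auto simp: F_hyps_def m_def)
  then obtain ep where ep: "ep > 0" "\<forall>n. ep \<le> m n" by blast
  have "fseq x y z t zinf C ep (\<lambda>n. fst (f n)) (\<lambda>n. fst (snd (f n))) (\<lambda>n. fst (snd (snd (f n)))) (\<lambda>n. snd (snd (snd (f n))))"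
    using f H ep by unfold_locales (auto simp: F_hyps_def m_def)
  thus ?thesis by blast
qed

theorem mainTheorem11:
  shows "(\<forall>x y z t zinf C \<epsilon> n0. F_hyps x y z t zinf C \<epsilon> n0 \<longrightarrow> convergent (lam_seq x zinf))
   \<and> (\<forall>C \<epsilon> L. C > 1 \<longrightarrow> \<epsilon> > 0 \<longrightarrow>
        (\<exists>c1::real. c1 > 0 \<and>
          (\<forall>x y z t zinf n0 lam. F_hyps x y z t zinf C \<epsilon> n0 \<longrightarrow>
             lam_seq x zinf \<longlonglongrightarrow> lam \<longrightarrow> cmod lam = L \<longrightarrow>
             (\<exists>P0::nat. \<forall>P\<ge>P0. \<forall>k::nat.
                cmod (z k - t k) \<le> 2 powr (- (real P + real k + c1)) \<longrightarrow>
                (\<forall>j<k. \<not> cmod (z j - t j) \<le> 2 powr (- (real P + real j + c1))) \<longrightarrow>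
                cmod (lam_seq x zinf (Suc k) - lam) \<le> 2 powr (- real P)))))"
proof (intro conjI allI impI)
  fix x y z t :: "nat \<Rightarrow> complex" and zinf C \<epsilon> n0
  assume "F_hyps x y z t zinf C \<epsilon> n0"
  then obtain ep a b c d where "fseq x y z t zinf C ep a b c d" using from_hyps by blast
  thus "convergent (lam_seq x zinf)" by (rule fseq.part1')
next
  fix C \<epsilon> :: real and L :: real
  assume "C > 1" "\<epsilon> > 0"
  show "\<exists>c1::real. c1 > 0 \<and>
          (\<forall>x y z t zinf n0 lam. F_hyps x y z t zinf C \<epsilon> n0 \<longrightarrow>
             lam_seq x zinf \<longlonglongrightarrow> lam \<longrightarrow> cmod lam = L \<longrightarrow>
             (\<exists>P0::nat. \<forall>P\<ge>P0. \<forall>k::nat.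
                cmod (z k - t k) \<le> 2 powr (- (real P + real k + c1)) \<longrightarrow>
                (\<forall>j<k. \<not> cmod (z j - t j) \<le> 2 powr (- (real P + real j + c1))) \<longrightarrow>
                cmod (lam_seq x zinf (Suc k) - lam) \<le> 2 powr (- real P)))"
  proof (intro exI[of _ "1::real"] conjI allI impI)
    fix x y z t :: "nat \<Rightarrow> complex" and zinf n0 lam
    assume H: "F_hyps x y z t zinf C \<epsilon> n0" and lim: "lam_seq x zinf \<longlonglongrightarrow> lam" and "cmod lam = L"
    then obtain ep a b c d where F: "fseq x y z t zinf C ep a b c d" using from_hyps by blast
    from fseq.part2'[OF F lim] obtain P0 where
      P0: "\<forall>P\<ge>P0. \<forall>k. cmod (z k - t k) \<le> 2 powr (-(real P + real k + 1)) \<longrightarrow> cmod (lam_seq x zinf (Suc k) - lam) \<le> 2 powr (- real P)"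
      by blast
    show "\<exists>P0::nat. \<forall>P\<ge>P0. \<forall>k::nat.
                cmod (z k - t k) \<le> 2 powr (- (real P + real k + 1)) \<longrightarrow>
                (\<forall>j<k. \<not> cmod (z j - t j) \<le> 2 powr (- (real P + real j + 1))) \<longrightarrow>
                cmod (lam_seq x zinf (Suc k) - lam) \<le> 2 powr (- real P)"
      using P0 by blast
  qed simp
qed


end
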